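(* For every $k\in\mathbb{N}$, if $W_0=e$ and, for each $j<k$, $(W_j,U_j)\in O$ and $(U_j,W_{j+1})\in I$, then $n(W_k)=\dfrac{4(4^k-1)}{3}$.
   Context: Let $\mathbb{T}$ be the set of finite terms defined inductively by: the constant $e\in\mathbb{T}$; and if $X\in\mathbb{T}$ and $Xs$ is a finite (possibly empty) list of elements of $\mathbb{T}$, then $v(X,Xs)\in\mathbb{T}$ and $w(X,Xs)\in\mathbb{T}$. Write $[\,]$ for the empty list and $[Y|Xs]$ for the list with first element $Y$ followed by $Xs$. Define $n:\mathbb{T}\to\mathbb{N}$ by $n(e)=0$, $n(v(X,[\,]))=2^{n(X)+1}-1$, $n(v(X,[Y|Xs]))=(n(w(Y,Xs))+1)2^{n(X)+1}-1$, $n(w(X,[\,]))=2^{n(X)+2}-2$, $n(w(X,[Y|Xs]))=(n(v(Y,Xs))+2)2^{n(X)+1}-2$. Let $\sigma\subseteq\mathbb{T}\times\mathbb{T}$ be the smallest relation such that: (1) $\sigma(e,v(e,[\,]))$; (2) $\sigma(v(e,[\,]),w(e,[\,]))$; (3) if $\sigma(X,X')$ then $\sigma(v(e,[X|Xs]),w(X',Xs))$; (4) if $\sigma(P,T)$ then $\sigma(v(T,Xs),w(e,[P|Xs]))$; (5) if $\sigma(T,T')$ then $\sigma(w(T,[\,]),v(T',[\,]))$; (6) $\sigma(w(Z,[e]),v(Z,[e]))$; (7) if $\sigma(Y,Y')$ then $\sigma(w(Z,[e,Y|Ys]),v(Z,[Y'|Ys]))$; (8) if $\sigma(X',X)$ then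 $\sigma(w(Z,[X|Xs]),v(Z,[e,X'|Xs]))$. Let $O\subseteq\mathbb{T}\times\mathbb{T}$ consist of $(e,v(e,[\,]))$, $(w(X,Xs),v(e,[X|Xs]))$, and $(v(X,Xs),v(X',Xs))$ whenever $\sigma(X,X')$. Let $I\subseteq\mathbb{T}\times\mathbb{T}$ consist of $(e,w(e,[\,]))$, $(v(X,Xs),w(e,[X|Xs]))$, and $(w(X,Xs),w(X',Xs))$ whenever $\sigma(X,X')$. (These emulate the maps $x\mapsto 2x+1$ and $x\mapsto 2x+2$.) *)

theory Defs
  imports Complex_Main
begin

datatype T = E | V T "T list" | W T "T list"

function n :: "T \<Rightarrow> nat" where
  "n E = 0"
| "n (V X []) = 2 ^ (n X + 1) - 1"
| "n (V X (Y # Xs)) = (n (W Y Xs) + 1) * 2 ^ (n X + 1) - 1"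
| "n (W X []) = 2 ^ (n X + 2) - 2"
| "n (W X (Y # Xs)) = (n (V Y Xs) + 2) * 2 ^ (n X + 1) - 2"
  by pat_completeness auto
termination by (relation "measure size") auto

inductive sigma :: "T \<Rightarrow> T \<Rightarrow> bool" where
  s1: "sigma E (V E [])"
| s2: "sigma (V E []) (W E [])"
| s3: "sigma X X' \<Longrightarrow> sigma (V E (X # Xs)) (W X' Xs)"
| s4: "sigma P T \<Longrightarrow> sigma (V T Xs) (W E (P # Xs))"
| s5: "sigma T T' \<Longrightarrow> sigma (W T []) (V T' [])"
| s6: "sigma (W Z [E]) (V Z [E])"
| s7: "sigma Y Y' \<Longrightarrow> sigma (W Z (E # Y # Ys)) (V Z (Y' # Ys))"
| s8: "sigma X' X \<Longrightarrow> sigma (W Z (X # Xs)) (V Z (E # X' # Xs))"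

inductive O_rel :: "T \<Rightarrow> T \<Rightarrow> bool" where
  "O_rel E (V E [])"
| "O_rel (W X Xs) (V E (X # Xs))"
| "sigma X X' \<Longrightarrow> O_rel (V X Xs) (V X' Xs)"

inductive I_rel :: "T \<Rightarrow> T \<Rightarrow> bool" where
  "I_rel E (W E [])"
| "I_rel (V X Xs) (W E (X # Xs))"
| "sigma X X' \<Longrightarrow> I_rel (W X Xs) (W X' Xs)"

end

theory Submission
  imports Defs
begin

lemma nV: "n (V X Xs) + 1 = (case Xs of [] \<Rightarrow> 1 | Y # Ys \<Rightarrow> n (W Y Ys) + 1) * 2 ^ (n X + 1)"
proof (cases Xs)
  case Nil
  have p: "(1::nat) \<le> 2 ^ n X" by simp
  show ?thesis using Nil p by (simp; linarith)
next
  case (Cons Y Ys)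
  have p: "(1::nat) \<le> (n (W Y Ys) + 1) * 2 ^ (n X + 1)"
  proof -
    have "(1::nat) \<le> 1 * 1" by simp
    also have "\<dots> \<le> (n (W Y Ys) + 1) * 2 ^ (n X + 1)" by (rule mult_le_mono) simp_all
    finally show ?thesis .
  qed
  have "n (V X Xs) = (n (W Y Ys) + 1) * 2 ^ (n X + 1) - 1" using Cons by simp
  then show ?thesis using Cons p by simp
qed

lemma nW: "n (W X Xs) + 2 = (case Xs of [] \<Rightarrow> 2 | Y # Ys \<Rightarrow> n (V Y Ys) + 2) * 2 ^ (n X + 1)"
proof (cases Xs)
  case Nil
  have p: "(1::nat) \<le> 2 ^ n X" by simp
  show ?thesis using Nil p by (simp; linarith)
next
  case (Cons Y Ys)
  have p: "(2::nat) \<le> (n (V Y Ys) + 2) * 2 ^ (n X + 1)"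
  proof -
    have "(2::nat) \<le> (n (V Y Ys) + 2) * 1" by simp
    also have "\<dots> \<le> (n (V Y Ys) + 2) * 2 ^ (n X + 1)" by (rule mult_le_mono2) simp
    finally show ?thesis .
  qed
  have "n (W X Xs) = (n (V Y Ys) + 2) * 2 ^ (n X + 1) - 2" using Cons by simp
  then show ?thesis using Cons p by simp
qed

lemma V_succ: "n X' = n X + 1 \<Longrightarrow> n (V X' Xs) = 2 * n (V X Xs) + 1"
  using nV[of X' Xs] nV[of X Xs] by (simp add: power_Suc)

lemma W_succ: "n X' = n X + 1 \<Longrightarrow> n (W X' Xs) = 2 * n (W X Xs) + 2"
  using nW[of X' Xs] nW[of X Xs] by (simp add: power_Suc)

lemma VE: "n (V E (Y # Ys)) = 2 * n (W Y Ys) + 1" by simp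
lemma WE: "n (W E (Y # Ys)) = 2 * n (V Y Ys) + 2" by simp

lemma sigma_n: "sigma X Y \<Longrightarrow> n Y = n X + 1"
proof (induction rule: sigma.induct)
  case (s3 X X' Xs)
  then show ?case using W_succ[of X' X Xs] by simp
next
  case (s4 P T Xs)
  then show ?case using V_succ[of T P Xs] by simp
next
  case (s6 Z)
  then show ?case using nV[of Z "[E]"] nW[of Z "[E]"] by simp
next
  case (s7 Y Y' Z Ys)
  then show ?case using nV[of Z "Y' # Ys"] nW[of Z "E # Y # Ys"] W_succ[of Y' Y Ys] by simp
next
  case (s8 X' X Z Xs)
  then show ?case using nV[of Z "E # X' # Xs"] nW[of Z "X # Xs"] V_succ[of X X' Xs] by simp
next
  case (s5 T T')
  have p: "(1::nat) \<le> 2 ^ n T" by simp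
  then show ?case using s5 by (simp; linarith)
qed (simp_all add: power_Suc)

lemma O_n: "O_rel X Y \<Longrightarrow> n Y = 2 * n X + 1"
  by (induction rule: O_rel.induct) (auto dest!: sigma_n simp: V_succ)

lemma I_n: "I_rel X Y \<Longrightarrow> n Y = 2 * n X + 2"
  by (induction rule: I_rel.induct) (auto dest!: sigma_n simp: W_succ)

theorem proposition12:
  fixes k :: nat and Ws Us :: "nat \<Rightarrow> T"
  assumes "Ws 0 = E"
    and "\<And>j. j < k \<Longrightarrow> O_rel (Ws j) (Us j) \<and> I_rel (Us j) (Ws (Suc j))"
  shows "real (n (Ws k)) = 4 * (4 ^ k - 1) / 3"
  using assms(2)
proof (induction k)
  case 0
  then show ?case using assms(1) by simp
next
  case (Suc k)
  have IH: "real (n (Ws k)) = 4 * (4 ^ k - 1) / 3" using Suc by simp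
  have "O_rel (Ws k) (Us k) \<and> I_rel (Us k) (Ws (Suc k))" using Suc.prems by simp
  then have "n (Ws (Suc k)) = 4 * n (Ws k) + 4" using O_n I_n by fastforce
  then have "real (n (Ws (Suc k))) = 4 * real (n (Ws k)) + 4" by simp
  then show ?case using IH by (simp add: field_simps)
qed

end
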